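(* Let $\mathrm{M}$ be a simple matroid of rank at least $3$ on ground set $E$, and let $i\in E$ be an element that is not a coloop such that the deletion $\mathrm{M}\setminus\{i\}$ is a Boolean matroid. Then there exists a rank-$1$ flat $F$ of $\mathrm{M}$ with $F\in\underline{S}_i$.
   Context: $\underline{S}_i$ is the family of flats $F$ of $\mathrm{M}$ such that $\varnothing\subsetneq F\subsetneq E\setminus\{i\}$ and $F\cup\{i\}$ is a flat. A Boolean matroid is one in which every subset of the ground set is independent. *)

theory Defs
  imports Main
begin

definition matroid :: "'a set \<Rightarrow> ('a set \<Rightarrow> bool) \<Rightarrow> bool" where
  "matroid E indep \<longleftrightarrow>
     finite E \<and> indep {} \<and>
     (\<forall>X. indep X \<longrightarrow> X \<subseteq> E) \<and>
     (\<forall>X Y. indep X \<and> Y \<subseteq> X \<longrightarrow> indep Y) \<and>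
     (\<forall>X Y. indep X \<and> indep Y \<and> card X < card Y \<longrightarrow>
        (\<exists>y \<in> Y - X. indep (insert y X)))"

definition rk :: "('a set \<Rightarrow> bool) \<Rightarrow> 'a set \<Rightarrow> nat" where
  "rk indep X = Max {card I | I. I \<subseteq> X \<and> indep I}"

definition basis :: "'a set \<Rightarrow> ('a set \<Rightarrow> bool) \<Rightarrow> 'a set \<Rightarrow> bool" where
  "basis E indep B \<longleftrightarrow> indep B \<and> B \<subseteq> E \<and> (\<forall>x \<in> E - B. \<not> indep (insert x B))"

definition flat :: "'a set \<Rightarrow> ('a set \<Rightarrow> bool) \<Rightarrow> 'a set \<Rightarrow> bool" where
  "flat E indep F \<longleftrightarrow> F \<subseteq> E \<and> (\<forall>x \<in> E - F. rk indep (insert x F) > rk indep F)"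

text \<open>Simple: no loops and no parallel elements.\<close>
definition simple_matroid :: "'a set \<Rightarrow> ('a set \<Rightarrow> bool) \<Rightarrow> bool" where
  "simple_matroid E indep \<longleftrightarrow> (\<forall>x \<in> E. \<forall>y \<in> E. indep {x, y})"

definition coloop :: "'a set \<Rightarrow> ('a set \<Rightarrow> bool) \<Rightarrow> 'a \<Rightarrow> bool" where
  "coloop E indep i \<longleftrightarrow> i \<in> E \<and> (\<forall>B. basis E indep B \<longrightarrow> i \<in> B)"

definition deletion_indep :: "'a set \<Rightarrow> ('a set \<Rightarrow> bool) \<Rightarrow> 'a set \<Rightarrow> ('a set \<Rightarrow> bool)" where
  "deletion_indep E indep D = (\<lambda>X. indep X \<and> X \<subseteq> E - D)"

definition boolean_matroid :: "'a set \<Rightarrow> ('a set \<Rightarrow> bool) \<Rightarrow> bool" where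
  "boolean_matroid E indep \<longleftrightarrow> (\<forall>X. X \<subseteq> E \<longrightarrow> indep X)"

definition S_under :: "'a set \<Rightarrow> ('a set \<Rightarrow> bool) \<Rightarrow> 'a \<Rightarrow> 'a set set" where
  "S_under E indep i = {F. flat E indep F \<and> {} \<subset> F \<and> F \<subset> E - {i} \<and> flat E indep (F \<union> {i})}"

end

theory Submission
  imports Defs
begin


lemma m_sub: "matroid E indep \<Longrightarrow> indep X \<Longrightarrow> X \<subseteq> E"
  unfolding matroid_def by (elim conjE) (erule allE, erule mp)
lemma m_fin: "matroid E indep \<Longrightarrow> finite E"
  unfolding matroid_def by (elim conjE)
lemma indep_sub: "matroid E indep \<Longrightarrow> indep X \<Longrightarrow> Y \<subseteq> X \<Longrightarrow> indep Y"
  unfolding matroid_def by (elim conjE) (erule allE, erule allE, erule mp, rule conjI)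
lemma augment: "matroid E indep \<Longrightarrow> indep X \<Longrightarrow> indep Y \<Longrightarrow> card X < card Y
   \<Longrightarrow> \<exists>y \<in> Y - X. indep (insert y X)"
  unfolding matroid_def apply (elim conjE) apply (erule allE[where x=X], erule allE[where x=Y], erule mp) by simp
lemma m_empty: "matroid E indep \<Longrightarrow> indep {}"
  unfolding matroid_def by (elim conjE)
lemma rk_indep:
  assumes m: "matroid E indep" and I: "indep X"
  shows "rk indep X = card X"
proof -
  have XE: "X \<subseteq> E" using m_sub[OF m I] .
  have fin: "finite X" using m_fin[OF m] XE by (rule finite_subset[rotated])
  let ?S = "{card I | I. I \<subseteq> X \<and> indep I}"
  have "?S \<subseteq> {0..card X}" using fin card_mono by fastforce
  hence finS: "finite ?S" using finite_subset by blast
  have "card X \<in> ?S" using I by blast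
  moreover have "\<forall>n\<in>?S. n \<le> card X" using fin card_mono by fastforce
  ultimately have "Max ?S = card X" using finS by (intro Max_eqI) auto
  thus ?thesis unfolding rk_def .
qed

theorem lemma3p5:
  fixes E :: "'a set" and indep :: "'a set \<Rightarrow> bool" and i :: 'a
  assumes "matroid E indep"
    and "simple_matroid E indep"
    and "rk indep E \<ge> 3"
    and "i \<in> E"
    and "\<not> coloop E indep i"
    and "boolean_matroid (E - {i}) (deletion_indep E indep {i})"
  shows "\<exists>F. flat E indep F \<and> rk indep F = 1 \<and> F \<in> S_under E indep i"
proof -
  note m = assms(1)
  have finE: "finite E" using m_fin[OF m] .
  have ind: "\<And>X. X \<subseteq> E - {i} \<Longrightarrow> indep X"
    using assms(6) unfolding boolean_matroid_def deletion_indep_def by blast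
  have pairs: "\<And>x y. x \<in> E \<Longrightarrow> y \<in> E \<Longrightarrow> indep {x, y}"
    using assms(2) unfolding simple_matroid_def by blast
  have depE: "\<not> indep E"
  proof
    assume iE: "indep E"
    obtain B where B: "basis E indep B" "i \<notin> B"
      using assms(4,5) unfolding coloop_def by blast
    have "indep (insert i B)" using indep_sub[OF m iE] B assms(4) unfolding basis_def by blast
    thus False using B assms(4) unfolding basis_def by blast
  qed
  have cardE: "card E \<ge> 4"
  proof -
    let ?S = "{card I | I. I \<subseteq> E \<and> indep I}"
    have "?S \<subseteq> {0..card E}" using finE card_mono by fastforce
    hence finS: "finite ?S" using finite_subset by blast
    have "indep {}" using m_empty[OF m] .
    hence "card {} \<in> ?S" by (intro CollectI exI[of _ "{}"]) simp
    hence "?S \<noteq> {}" by blast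
    hence "Max ?S \<in> ?S" using finS by (rule Max_in[rotated])
    then obtain I where I: "I \<subseteq> E" "indep I" "card I = rk indep E" unfolding rk_def by auto
    have "I \<noteq> E" using I depE by blast
    hence "card I < card E" using I finE by (meson psubsetI psubset_card_mono)
    thus ?thesis using I assms(3) by linarith
  qed
  define good where "good x \<longleftrightarrow> (\<forall>y\<in>E-{x,i}. indep {y,x,i})" for x
  have bad: "\<exists>y. y \<in> E \<and> y \<noteq> x \<and> y \<noteq> i \<and> \<not> indep {x,i,y}"
    if "\<not> good x" "x \<in> E" for x
    using that unfolding good_def by (auto simp: insert_commute)
  have ex: "\<exists>x\<in>E-{i}. good x"
  proof (rule ccontr)
    assume nx: "\<not> ?thesis"
    have "E - {i} \<noteq> {}" proof
      assume "E - {i} = {}"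
      hence "E \<subseteq> {i}" by blast
      hence "card E \<le> card {i}" by (rule card_mono[rotated]) simp
      thus False using cardE by simp
    qed
    then obtain x1 where x1: "x1 \<in> E" "x1 \<noteq> i" by blast
    obtain y1 where y1: "y1 \<in> E" "y1 \<noteq> x1" "y1 \<noteq> i" "\<not> indep {x1,i,y1}"
      using bad[of x1] nx x1 by blast
    have "card {x1,i,y1} \<le> 3" by (simp add: card_insert_le_m1)
    have "E - {x1,i,y1} \<noteq> {}" proof
      assume "E - {x1,i,y1} = {}"
      hence "E \<subseteq> {x1,i,y1}" by blast
      hence "card E \<le> card {x1,i,y1}" by (rule card_mono[rotated]) simp
      thus False using cardE \<open>card {x1,i,y1} \<le> 3\<close> by linarith
    qed
    then obtain x2 where x2: "x2 \<in> E" "x2 \<noteq> x1" "x2 \<noteq> i" "x2 \<noteq> y1" by blast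
    obtain y2 where y2: "y2 \<in> E" "y2 \<noteq> x2" "y2 \<noteq> i" "\<not> indep {x2,i,y2}"
      using bad[of x2] nx x2 by blast
    have W: "indep {x1,y1,x2}" by (rule ind) (use x1 y1 x2 in auto)
    have cW: "card {x1,y1,x2} = 3" using x1 y1 x2 by auto
    show False
    proof (cases "y2 = x1")
      case True
      obtain z where "z \<in> {x1,y1,x2} - {x1,i}" "indep (insert z {x1,i})"
        using augment[OF m pairs[OF x1(1) assms(4)] W] cW x1 by auto
      thus False using y1 y2 True by (auto simp: insert_commute)
    next
      case F1: False
      show False
      proof (cases "y2 = y1")
        case True
        obtain z where "z \<in> {x1,y1,x2} - {y1,i}" "indep (insert z {y1,i})"
          using augment[OF m pairs[OF y1(1) assms(4)] W] cW y1 by auto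
        thus False using y1 y2 True by (auto simp: insert_commute)
      next
        case F2: False
        obtain z where z: "z \<in> {x1,y1,x2} - {x1,i}" "indep (insert z {x1,i})"
          using augment[OF m pairs[OF x1(1) assms(4)] W] cW x1 by auto
        have z2: "z = x2" using z y1 by (auto simp: insert_commute)
        have T: "indep {x2,x1,i}" using z z2 by simp
        have W4: "indep {x1,y1,x2,y2}" by (rule ind) (use x1 y1 x2 y2 in auto)
        have c4: "card {x1,y1,x2,y2} = 4" using x1 y1 x2 y2 F1 F2 by auto
        have c3: "card {x2,x1,i} = 3" using x1 x2 by auto
        obtain w where w: "w \<in> {x1,y1,x2,y2} - {x2,x1,i}" "indep (insert w {x2,x1,i})"
          using augment[OF m T W4] c4 c3 by auto
        show False
        proof (cases "w = y1")
          case True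
          thus False using w y1 indep_sub[OF m w(2), of "{x1,i,y1}"] by auto
        next
          case False
          hence "w = y2" using w by auto
          thus False using w y2 indep_sub[OF m w(2), of "{x2,i,y2}"] by auto
        qed
      qed
    qed
  qed
  then obtain x where x: "x \<in> E" "x \<noteq> i" "good x" by blast
  have r1: "rk indep {x} = 1" using rk_indep[OF m, of "{x}"] indep_sub[OF m pairs[OF x(1) x(1)]] by auto
  have fx: "flat E indep {x}"
    unfolding flat_def
  proof (intro conjI ballI)
    show "{x} \<subseteq> E" using x by auto
    fix y assume "y \<in> E - {x}"
    hence "rk indep (insert y {x}) = 2" using rk_indep[OF m pairs[OF _ x(1)], of y] by auto
    thus "rk indep {x} < rk indep (insert y {x})" using r1 by simp
  qed
  have r2: "rk indep {x,i} = 2" using rk_indep[OF m pairs[OF x(1) assms(4)]] x by auto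
  have fxi: "flat E indep ({x} \<union> {i})"
    unfolding flat_def
  proof (intro conjI ballI)
    show "{x} \<union> {i} \<subseteq> E" using x assms(4) by auto
    fix y assume y: "y \<in> E - ({x} \<union> {i})"
    hence "indep {y,x,i}" using x(3) unfolding good_def by auto
    hence "rk indep {y,x,i} = 3" using y x by (subst rk_indep[OF m]) auto
    thus "rk indep ({x} \<union> {i}) < rk indep (insert y ({x} \<union> {i}))" proof -
      have "{x} \<union> {i} = {x,i}" "insert y ({x} \<union> {i}) = {y,x,i}" by auto
      thus ?thesis using r2 \<open>rk indep {y,x,i} = 3\<close> by simp
    qed
  qed
  have "{x} \<subset> E - {i}"
  proof -
    have "card (E - {i}) \<ge> 3" using cardE assms(4) finE by simp
    hence "E - {i} \<noteq> {x}" by (metis card.empty card_insert_disjoint empty_iff finite.emptyI numeral_le_one_iff semiring_norm(70) One_nat_def)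
    thus ?thesis using x by auto
  qed
  hence "{x} \<in> S_under E indep i" unfolding S_under_def using fx fxi by auto
  thus ?thesis using fx r1 by blast
qed

end
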